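(* Let $O\in\{\mathrm{LimInf}(=-\infty),\mathrm{LimInf}(>-\infty),\mathrm{LimInf}(=+\infty),\mathrm{LimInf}(<+\infty)\}$ and let $\mathcal{G}$ be a finite maximizing MDP with reward function $r:V\to\{-1,0,1\}$. Let $W=\{s\in V\mid \mathrm{Val}^O(s)=1\}$. Then $\mathrm{Val}^O(s)=\mathrm{Val}^{\mathrm{Reach}(W)}(s)$ for every state $s$.
   Context: A maximizing MDP is a finite directed graph $(V,\to)$, every vertex with a successor, with states partitioned into states of player Max and random states (with rational probability distributions on outgoing edges). $\mathbb{P}^\sigma_s$ is the measure on runs from $s$ under Max strategy $\sigma$, and $\mathrm{Val}^O(s)=\sup_\sigma\mathbb{P}^\sigma_s(O)$. For $\Delta\in\{=,>,<\}$, $z\in\{\pm\infty\}$: $\mathrm{LimInf}(\Delta z)=\{w\mid \liminf_{n}\sum_{i=0}^n r(w(i))\ \Delta\ z\}$. $\mathrm{Reach}(W)=\{w\mid\exists i\ge0: w(i)\in W\}$. *)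

theory Defs
  imports "HOL-Probability.Probability"
begin

text \<open>A finite maximizing MDP: vertices are the elements of the finite type 'v,
  E is the edge relation, VM the states of player Max (all other states are random),
  P s the (rational) distribution on the successors of a random state s.\<close>

definition mdp :: "('v::finite \<times> 'v) set \<Rightarrow> 'v set \<Rightarrow> ('v \<Rightarrow> 'v pmf) \<Rightarrow> bool" where
  "mdp E VM P \<longleftrightarrow> (\<forall>s. \<exists>t. (s, t) \<in> E) \<and>
     (\<forall>s. s \<notin> VM \<longrightarrow> set_pmf (P s) = E `` {s} \<and> (\<forall>t. pmf (P s) t \<in> \<rat>))"

definition strategy :: "('v \<times> 'v) set \<Rightarrow> 'v set \<Rightarrow> ('v list \<Rightarrow> 'v pmf) \<Rightarrow> bool" where
  "strategy E VM \<sigma> \<longleftrightarrow> (\<forall>h. h \<noteq> [] \<and> last h \<in> VM \<longrightarrow> set_pmf (\<sigma> h) \<subseteq> E `` {last h})"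

definition next_dist :: "'v set \<Rightarrow> ('v \<Rightarrow> 'v pmf) \<Rightarrow> ('v list \<Rightarrow> 'v pmf) \<Rightarrow> 'v list \<Rightarrow> 'v pmf" where
  "next_dist VM P \<sigma> h = (if last h \<in> VM then \<sigma> h else P (last h))"

text \<open>Probability of the finite path h (given it starts in the initial state).\<close>
definition path_prob :: "'v set \<Rightarrow> ('v \<Rightarrow> 'v pmf) \<Rightarrow> ('v list \<Rightarrow> 'v pmf) \<Rightarrow> 'v list \<Rightarrow> real" where
  "path_prob VM P \<sigma> h = (\<Prod>i<length h - 1. pmf (next_dist VM P \<sigma> (take (Suc i) h)) (h ! Suc i))"

definition run_measure :: "'v set \<Rightarrow> ('v \<Rightarrow> 'v pmf) \<Rightarrow> ('v list \<Rightarrow> 'v pmf) \<Rightarrow> 'v \<Rightarrow> 'v stream measure" where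
  "run_measure VM P \<sigma> s = (SOME M. sets M = sets (stream_space (count_space UNIV)) \<and> prob_space M \<and>
     (\<forall>h. h \<noteq> [] \<longrightarrow> emeasure M {\<omega> \<in> space M. stake (length h) \<omega> = h}
          = ennreal (if hd h = s then path_prob VM P \<sigma> h else 0)))"

definition Val :: "('v \<times> 'v) set \<Rightarrow> 'v set \<Rightarrow> ('v \<Rightarrow> 'v pmf) \<Rightarrow> 'v stream set \<Rightarrow> 'v \<Rightarrow> real" where
  "Val E VM P Obj s = (SUP \<sigma> \<in> {\<sigma>. strategy E VM \<sigma>}. measure (run_measure VM P \<sigma> s) Obj)"

definition LimInf :: "('v \<Rightarrow> int) \<Rightarrow> (ereal \<Rightarrow> ereal \<Rightarrow> bool) \<Rightarrow> ereal \<Rightarrow> 'v stream set" where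
  "LimInf r \<Delta> z = {w. \<Delta> (liminf (\<lambda>n. ereal (real_of_int (\<Sum>i\<le>n. r (w !! i))))) z}"

definition Reach :: "'v set \<Rightarrow> 'v stream set" where
  "Reach W = {w. \<exists>i. w !! i \<in> W}"

end

theory Submission
  imports Defs
begin



definition Qk :: "'v set \<Rightarrow> ('v \<Rightarrow> 'v pmf) \<Rightarrow> ('v list \<Rightarrow> 'v pmf) \<Rightarrow> 'v \<Rightarrow> 'v list \<Rightarrow> 'v pmf" where
  "Qk VM P \<sigma> s l = (if l = [] then return_pmf s else next_dist VM P \<sigma> l)"

definition cp :: "'v set \<Rightarrow> ('v \<Rightarrow> 'v pmf) \<Rightarrow> ('v list \<Rightarrow> 'v pmf) \<Rightarrow> 'v \<Rightarrow> 'v list \<Rightarrow> real" where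
  "cp VM P \<sigma> s h = (if h = [] then 1 else if hd h = s then path_prob VM P \<sigma> h else 0)"

lemma path_prob_snoc:
  assumes "xs \<noteq> []"
  shows "path_prob VM P \<sigma> (xs @ [a]) = path_prob VM P \<sigma> xs * pmf (next_dist VM P \<sigma> xs) a"
proof -
  obtain k where k: "length xs = Suc k" using assms by (cases xs) auto
  have "path_prob VM P \<sigma> (xs @ [a]) = (\<Prod>i<Suc k. pmf (next_dist VM P \<sigma> (take (Suc i) (xs@[a]))) ((xs@[a]) ! Suc i))"
    by (simp add: path_prob_def k)
  also have "\<dots> = (\<Prod>i<k. pmf (next_dist VM P \<sigma> (take (Suc i) (xs@[a]))) ((xs@[a]) ! Suc i)) *
      pmf (next_dist VM P \<sigma> (take (Suc k) (xs@[a]))) ((xs@[a]) ! Suc k)"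
    by simp
  also have "(\<Prod>i<k. pmf (next_dist VM P \<sigma> (take (Suc i) (xs@[a]))) ((xs@[a]) ! Suc i)) = path_prob VM P \<sigma> xs"
    unfolding path_prob_def k by (intro prod.cong) (auto simp: k nth_append)
  finally show ?thesis using k by (simp add: nth_append)
qed

lemma path_prob_single[simp]: "path_prob VM P \<sigma> [x] = 1"
  by (simp add: path_prob_def)

lemma cp_snoc: "cp VM P \<sigma> s (h @ [a]) = cp VM P \<sigma> s h * pmf (Qk VM P \<sigma> s h) a"
  by (cases "h = []") (auto simp: cp_def Qk_def path_prob_snoc pmf_return hd_append)

lemma cp_nonneg: "0 \<le> cp VM P \<sigma> s h"
  by (auto simp: cp_def path_prob_def prod_nonneg)

definition cylPi :: "'v list \<Rightarrow> (nat \<Rightarrow> 'v) set" where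
  "cylPi h = {x \<in> space (PiM {0..<length h} (\<lambda>_. count_space UNIV)). \<forall>j<length h. x j = h ! j}"

lemma cylPi_sets: "cylPi h \<in> sets (PiM {0..<length h} (\<lambda>_. count_space UNIV))"
  unfolding cylPi_def by measurable

lemma map_upt_eq_iff: "map x [0..<n] = l \<longleftrightarrow> length l = n \<and> (\<forall>j<n. x j = l ! j)"
  by (auto simp: list_eq_iff_nth_eq)

lemma meas_map_upt:
  "(\<lambda>x. map x [0..<i]) \<in> measurable (PiM {0..<i} (\<lambda>_. count_space (UNIV::'v::countable set))) (count_space UNIV)"
proof (subst measurable_count_space_eq_countable, simp, safe)
  fix l :: "'v list"
  have "(\<lambda>x. map x [0..<i]) -` {l} \<inter> space (PiM {0..<i} (\<lambda>_. count_space UNIV)) =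
     {x\<in>space (PiM {0..<i} (\<lambda>_. count_space UNIV)). length l = i \<and> (\<forall>j<i. x j = l ! j)}"
    by (auto simp: map_upt_eq_iff)
  also have "\<dots> \<in> sets (PiM {0..<i} (\<lambda>_. count_space UNIV))"
    by measurable
  finally show "(\<lambda>x. map x [0..<i]) -` {l} \<inter> space (PiM {0..<i} (\<lambda>_. count_space UNIV)) \<in> sets (PiM {0..<i} (\<lambda>_. count_space UNIV))" .
qed simp

lemma meas_Qk:
  "(\<lambda>x. measure_pmf (Qk VM P \<sigma> s (map x [0..<i]))) \<in> measurable (PiM {0..<i} (\<lambda>_. count_space (UNIV::'v::countable set))) (subprob_algebra (count_space UNIV))"
proof -
  have "(\<lambda>l. measure_pmf (Qk VM P \<sigma> s l)) \<in> measurable (count_space UNIV) (subprob_algebra (count_space (UNIV::'v set)))"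
    by (auto simp: space_subprob_algebra subprob_space_measure_pmf)
  from measurable_compose[OF meas_map_upt this] show ?thesis by (simp add: comp_def)
qed

lemma cylPi_upd:
  assumes x: "x \<in> space (PiM {0..<n} (\<lambda>_. count_space UNIV))" and l: "length h0 = n"
  shows "x(n:=y) \<in> cylPi (h0@[a]) \<longleftrightarrow> x \<in> cylPi h0 \<and> y = a"
proof -
  have "x(n:=y) \<in> space (PiM {0..<Suc n} (\<lambda>_. count_space UNIV))"
    using x by (auto simp: space_PiM PiE_iff extensional_def)
  moreover have "(\<forall>j<Suc n. (x(n:=y)) j = (h0@[a]) ! j) \<longleftrightarrow> (\<forall>j<n. x j = h0 ! j) \<and> y = a"
    using l by (auto simp: less_Suc_eq nth_append)
  ultimately show ?thesis using x l by (simp add: cylPi_def)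
qed

locale runM =
  fixes VM :: "'v::finite set" and P :: "'v \<Rightarrow> 'v pmf" and \<sigma> :: "'v list \<Rightarrow> 'v pmf" and s :: 'v
begin

sublocale IT: Ionescu_Tulcea "\<lambda>i x. measure_pmf (Qk VM P \<sigma> s (map x [0..<i]))" "\<lambda>_. count_space UNIV"
  by unfold_locales (auto simp: meas_Qk prob_space_measure_pmf)

lemma C_cyl:
  "length h = n \<Longrightarrow> emeasure (IT.C 0 n (\<lambda>_. undefined)) (cylPi h) = ennreal (cp VM P \<sigma> s h)"
proof (induction n arbitrary: h)
  case 0
  then have h: "h = []" by simp
  have "(\<lambda>_. undefined) \<in> space (PiM {0..<0} (\<lambda>_. count_space (UNIV::'v set)))"
    by (simp add: space_PiM PiE_def extensional_def)
  then show ?case by (simp add: h cylPi_def cp_def)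
next
  case (Suc n)
  then obtain h0 a where h: "h = h0 @ [a]" and l0: "length h0 = n"
    by (cases h rule: rev_cases) auto
  let ?u = "(\<lambda>_. undefined) :: nat \<Rightarrow> 'v"
  have u: "?u \<in> space (PiM {0..<0} (\<lambda>_. count_space (UNIV::'v set)))"
    by (simp add: space_PiM PiE_def extensional_def)
  have sp: "space (IT.C 0 n ?u) = space (PiM {0..<n} (\<lambda>_. count_space UNIV))"
    using IT.space_C[OF u] by simp
  have ne: "space (IT.C 0 n ?u) \<noteq> {}"
    using IT.prob_space_C[OF u] prob_space.not_empty by blast
  have meP: "IT.eP n \<in> measurable (IT.C 0 n ?u) (subprob_algebra (PiM {0..<Suc n} (\<lambda>_. count_space UNIV)))"
  proof -
    have ss: "sets (IT.C 0 n ?u) = sets (PiM {0..<n} (\<lambda>_. count_space (UNIV::'v set)))"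
      using IT.sets_C[OF u, of n] by simp
    show ?thesis unfolding measurable_cong_sets[OF ss refl] by (rule IT.measurable_eP)
  qed
  have cylS: "cylPi h \<in> sets (PiM {0..<Suc n} (\<lambda>_. count_space UNIV))"
    using Suc.prems cylPi_sets[of h] by simp
  have "emeasure (IT.C 0 (Suc n) ?u) (cylPi h) = \<integral>\<^sup>+x. emeasure (IT.eP n x) (cylPi h) \<partial>IT.C 0 n ?u"
    by (simp add: emeasure_bind[OF ne meP cylS])
  also have "\<dots> = \<integral>\<^sup>+x. indicator (cylPi h0) x * ennreal (pmf (Qk VM P \<sigma> s h0) a) \<partial>IT.C 0 n ?u"
  proof (rule nn_integral_cong)
    fix x assume x: "x \<in> space (IT.C 0 n ?u)"
    then have x': "x \<in> space (PiM {0..<n} (\<lambda>_. count_space UNIV))" using sp by simp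
    have "emeasure (IT.eP n x) (cylPi h) = emeasure (measure_pmf (Qk VM P \<sigma> s (map x [0..<n])))
        ((\<lambda>y. x(n := y)) -` cylPi h \<inter> UNIV)"
      using IT.emeasure_eP[OF x' cylS] by simp
    also have "\<dots> = indicator (cylPi h0) x * ennreal (pmf (Qk VM P \<sigma> s h0) a)"
    proof (cases "x \<in> cylPi h0")
      case True
      then have m: "map x [0..<n] = h0" using l0 by (auto simp: cylPi_def map_upt_eq_iff)
      have "(\<lambda>y. x(n := y)) -` cylPi h \<inter> UNIV = {a}"
        using True cylPi_upd[OF x' l0] by (auto simp: h)
      then show ?thesis using True m by (simp add: emeasure_pmf_single)
    next
      case False
      have "(\<lambda>y. x(n := y)) -` cylPi h \<inter> UNIV = {}"
        using False cylPi_upd[OF x' l0] by (auto simp: h)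
      then show ?thesis using False by simp
    qed
    finally show "emeasure (IT.eP n x) (cylPi h) = indicator (cylPi h0) x * ennreal (pmf (Qk VM P \<sigma> s h0) a)" .
  qed
  also have "\<dots> = ennreal (pmf (Qk VM P \<sigma> s h0) a) * emeasure (IT.C 0 n ?u) (cylPi h0)"
  proof -
    have "cylPi h0 \<in> sets (IT.C 0 n ?u)"
      using IT.sets_C[OF u, of n] l0 cylPi_sets[of h0] by simp
    then show ?thesis
      by (subst nn_integral_multc) (auto simp: mult.commute)
  qed
  also have "\<dots> = ennreal (cp VM P \<sigma> s h)"
    using Suc.IH[OF l0] by (simp add: h cp_snoc ennreal_mult cp_nonneg mult.commute)
  finally show ?case .
qed

lemma prob_lim: "prob_space IT.PF.lim"
proof -
  have eq: "IT.CI {} = distr IT.PF.lim (PiM {} (\<lambda>_. count_space UNIV)) (\<lambda>x. restrict x {})"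
    by (rule IT.distr_lim[symmetric]) simp
  have ps: "prob_space (IT.CI {})" by (rule IT.PF.prob_space_P) auto
  have sp: "space (IT.CI {}) = space (PiM {} (\<lambda>_. count_space (UNIV::'v set)))"
    by (simp add: eq)
  have "emeasure (IT.CI {}) (space (IT.CI {})) = 1"
    using ps by (rule prob_space.emeasure_space_1)
  then have "emeasure (distr IT.PF.lim (PiM {} (\<lambda>_. count_space UNIV)) (\<lambda>x. restrict x {})) (space (PiM {} (\<lambda>_. count_space (UNIV::'v set)))) = 1"
    by (simp only: sp flip: eq)
  moreover have "(\<lambda>x. restrict x {}) \<in> measurable IT.PF.lim (PiM {} (\<lambda>_. count_space (UNIV::'v set)))"
    unfolding measurable_cong_sets[OF IT.PF.sets_lim refl] by (rule measurable_restrict_subset) simp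
  moreover have "(\<lambda>x. restrict x {}) -` space (PiM {} (\<lambda>_. count_space (UNIV::'v set))) \<inter> space IT.PF.lim = space IT.PF.lim"
    by (auto simp: space_PiM)
  ultimately have "emeasure IT.PF.lim (space IT.PF.lim) = 1"
    by (simp add: emeasure_distr)
  then show ?thesis by (rule prob_spaceI)
qed

definition Rm :: "'v stream measure" where
  "Rm = distr IT.PF.lim (stream_space (count_space UNIV)) to_stream"

lemma meas_to_stream: "to_stream \<in> measurable IT.PF.lim (stream_space (count_space UNIV))"
  unfolding measurable_cong_sets[OF IT.PF.sets_lim refl] by (rule measurable_to_stream)

lemma Rm_cyl: "emeasure Rm (sstart UNIV h) = ennreal (cp VM P \<sigma> s h)"
proof -
  have sp: "space (PiM UNIV (\<lambda>_. count_space (UNIV::'v set))) = UNIV"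
    by (auto simp: space_PiM)
  have ts: "to_stream x !! i = x i" for x :: "nat \<Rightarrow> 'v" and i
    by (simp add: to_stream_def)
  have eq: "to_stream -` sstart UNIV h \<inter> space (PiM UNIV (\<lambda>_. count_space (UNIV::'v set))) = IT.PF.emb UNIV {0..<length h} (cylPi h)"
    unfolding sp by (auto simp: sstart_eq ts prod_emb_iff cylPi_def space_PiM)
  have "emeasure Rm (sstart UNIV h) = emeasure IT.PF.lim (IT.PF.emb UNIV {0..<length h} (cylPi h))"
    unfolding Rm_def by (simp add: emeasure_distr[OF meas_to_stream sstart_sets] eq)
  also have "\<dots> = emeasure (IT.CI {0..<length h}) (cylPi h)"
    by (rule IT.lim[OF _ cylPi_sets]) simp
  also have "\<dots> = emeasure (IT.C 0 (length h) (\<lambda>_. undefined)) (cylPi h)"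
  proof -
    have "IT.PF.emb {0..<length h} {0..<length h} (cylPi h) = cylPi h"
      by (rule prod_emb_id) (auto simp: cylPi_def space_PiM)
    then show ?thesis using IT.emeasure_CI[OF _ cylPi_sets[of h], of "length h"] by simp
  qed
  also have "\<dots> = ennreal (cp VM P \<sigma> s h)" by (rule C_cyl) simp
  finally show ?thesis .
qed

lemma Rm_spec: "sets Rm = sets (stream_space (count_space UNIV)) \<and> prob_space Rm"
  using prob_space.prob_space_distr[OF prob_lim meas_to_stream] by (simp add: Rm_def)

end

lemma stake_eq_iff: "stake (length h) \<omega> = h \<longleftrightarrow> (\<forall>i<length h. \<omega> !! i = h ! i)"
  by (auto simp: list_eq_iff_nth_eq)

lemma sstart_UNIV: "sstart UNIV h = {\<omega>. stake (length h) \<omega> = h}"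
  by (auto simp: sstart_eq stake_eq_iff)

lemma run_spec:
  "sets (run_measure VM P \<sigma> s) = sets (stream_space (count_space UNIV)) \<and> prob_space (run_measure VM P \<sigma> (s::'v::finite)) \<and>
     (\<forall>h. h \<noteq> [] \<longrightarrow> emeasure (run_measure VM P \<sigma> s) {\<omega> \<in> space (run_measure VM P \<sigma> s). stake (length h) \<omega> = h}
          = ennreal (if hd h = s then path_prob VM P \<sigma> h else 0))"
  unfolding run_measure_def
proof (rule someI_ex)
  interpret R: runM VM P \<sigma> s .
  have sp: "space R.Rm = UNIV" using R.Rm_spec sets_eq_imp_space_eq[of R.Rm "stream_space (count_space UNIV)"]
    by (simp add: space_stream_space)
  show "\<exists>M. sets M = sets (stream_space (count_space UNIV)) \<and> prob_space M \<and>
     (\<forall>h. h \<noteq> [] \<longrightarrow> emeasure M {\<omega> \<in> space M. stake (length h) \<omega> = h}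
          = ennreal (if hd h = s then path_prob VM P \<sigma> h else 0))"
    using R.Rm_spec R.Rm_cyl by (intro exI[of _ R.Rm]) (simp add: sp flip: sstart_UNIV add: cp_def)
qed




context
  fixes VM :: "'v::finite set" and P :: "'v \<Rightarrow> 'v pmf"
begin

abbreviation "RM \<equiv> run_measure VM P"

lemma run_sets[measurable_cong]: "sets (RM \<sigma> s) = sets (stream_space (count_space UNIV))"
  using run_spec by blast

lemma run_prob: "prob_space (RM \<sigma> s)"
  using run_spec by blast

lemma run_space[simp]: "space (RM \<sigma> s) = UNIV"
  using sets_eq_imp_space_eq[OF run_sets[of \<sigma> s]] by (simp add: space_stream_space)

lemma run_cyl: "emeasure (RM \<sigma> s) (sstart UNIV h) = ennreal (cp VM P \<sigma> s h)"
proof (cases "h = []")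
  case True
  then show ?thesis using prob_space.emeasure_space_1[OF run_prob[of \<sigma> s]]
    by (simp add: cp_def)
next
  case False
  then show ?thesis using run_spec[of VM P \<sigma> s] by (auto simp: cp_def sstart_UNIV)
qed

lemma path_prob_cong:
  assumes "\<And>g. g \<noteq> [] \<Longrightarrow> hd g = hd h \<Longrightarrow> \<sigma>1 g = \<sigma>2 g"
  shows "path_prob VM P \<sigma>1 h = path_prob VM P \<sigma>2 h"
  unfolding path_prob_def
proof (rule prod.cong[OF refl])
  fix i assume i: "i \<in> {..<length h - 1}"
  then have "take (Suc i) h \<noteq> []" "hd (take (Suc i) h) = hd h" by (auto simp: hd_take)
  then show "pmf (next_dist VM P \<sigma>1 (take (Suc i) h)) (h ! Suc i) = pmf (next_dist VM P \<sigma>2 (take (Suc i) h)) (h ! Suc i)"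
    using assms by (simp add: next_dist_def)
qed

lemma run_cong:
  assumes "\<And>g. g \<noteq> [] \<Longrightarrow> hd g = s \<Longrightarrow> \<sigma>1 g = \<sigma>2 g"
  shows "RM \<sigma>1 s = RM \<sigma>2 s"
proof -
  have "\<And>h. hd h = s \<Longrightarrow> path_prob VM P \<sigma>1 h = path_prob VM P \<sigma>2 h"
    by (rule path_prob_cong) (use assms in auto)
  then show ?thesis unfolding run_measure_def by (simp cong: if_cong)
qed

lemma next_dist_app: "g \<noteq> [] \<Longrightarrow> next_dist VM P (\<lambda>l. \<sigma> (b @ l)) g = next_dist VM P \<sigma> (b @ g)"
  by (simp add: next_dist_def)

lemma path_prob_append:
  assumes "h \<noteq> []" "g \<noteq> []" "hd g = last h"
  shows "path_prob VM P \<sigma> (butlast h @ g) = path_prob VM P \<sigma> h * path_prob VM P (\<lambda>l. \<sigma> (butlast h @ l)) g"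
  using assms(2,3)
proof (induction g rule: rev_induct)
  case Nil then show ?case by simp
next
  case (snoc a g0)
  show ?case
  proof (cases "g0 = []")
    case True
    then have "a = last h" using snoc by simp
    then have "butlast h @ [a] = h" using assms(1) by simp
    then show ?thesis using True by simp
  next
    case False
    then have IH: "path_prob VM P \<sigma> (butlast h @ g0) = path_prob VM P \<sigma> h * path_prob VM P (\<lambda>l. \<sigma> (butlast h @ l)) g0"
      using snoc by simp
    have "path_prob VM P \<sigma> (butlast h @ g0 @ [a]) = path_prob VM P \<sigma> (butlast h @ g0) * pmf (next_dist VM P \<sigma> (butlast h @ g0)) a"
      using path_prob_snoc[of "butlast h @ g0"] False by simp
    also have "\<dots> = path_prob VM P \<sigma> h * (path_prob VM P (\<lambda>l. \<sigma> (butlast h @ l)) g0 * pmf (next_dist VM P (\<lambda>l. \<sigma> (butlast h @ l)) g0) a)"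
      using IH next_dist_app[OF False] by simp
    also have "\<dots> = path_prob VM P \<sigma> h * path_prob VM P (\<lambda>l. \<sigma> (butlast h @ l)) (g0 @ [a])"
      using path_prob_snoc[OF False] by simp
    finally show ?thesis by simp
  qed
qed

lemma hd_butlast_app: "h \<noteq> [] \<Longrightarrow> g \<noteq> [] \<Longrightarrow> hd g = last h \<Longrightarrow> hd (butlast h @ g) = hd h"
  by (cases h rule: rev_cases) (auto simp: hd_append)

lemma cp_append:
  assumes "h \<noteq> []" "g \<noteq> []" "hd g = last h"
  shows "cp VM P \<sigma> s (butlast h @ g) = cp VM P \<sigma> s h * cp VM P (\<lambda>l. \<sigma> (butlast h @ l)) (last h) g"
  using assms path_prob_append[OF assms, of \<sigma>] hd_butlast_app[OF assms] by (simp add: cp_def)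

end

lemma sstart_shift:
  assumes "h \<noteq> []" "xs \<noteq> []" "hd xs = last h"
  shows "sstart UNIV h \<inter> sdrop (length h - 1) -` sstart UNIV xs = sstart UNIV (butlast h @ xs)"
proof -
  obtain b x where h: "h = b @ [x]" using assms(1) by (cases h rule: rev_cases) auto
  have x: "xs ! 0 = x" using assms h by (cases xs) auto
  have "(\<forall>i<Suc (length b). \<omega> !! i = (b @ [x]) ! i) \<and> (\<forall>j<length xs. \<omega> !! (length b + j) = xs ! j)
      \<longleftrightarrow> (\<forall>i<length b + length xs. \<omega> !! i = (b @ xs) ! i)" (is "?L \<omega> \<longleftrightarrow> ?R \<omega>") for \<omega> :: "'a stream"
  proof safe
    fix i assume A: "\<forall>i<Suc (length b). \<omega> !! i = (b @ [x]) ! i" "\<forall>j<length xs. \<omega> !! (length b + j) = xs ! j"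
      and i: "i < length b + length xs"
    show "\<omega> !! i = (b @ xs) ! i"
    proof (cases "i < length b")
      case True then show ?thesis using A(1) by (auto simp: nth_append)
    next
      case False
      then show ?thesis using A(2)[rule_format, of "i - length b"] i by (simp add: nth_append)
    qed
  next
    fix i assume A: "\<forall>i<length b + length xs. \<omega> !! i = (b @ xs) ! i" and i: "i < Suc (length b)"
    show "\<omega> !! i = (b @ [x]) ! i"
    proof (cases "i < length b")
      case True then show ?thesis using A by (auto simp: nth_append)
    next
      case False
      then have "i = length b" using i by simp
      then show ?thesis using A[rule_format, of i] assms(2) x by (cases xs) (auto simp: nth_append)
    qed
  next
    fix j assume A: "\<forall>i<length b + length xs. \<omega> !! i = (b @ xs) ! i" and j: "j < length xs"
    show "\<omega> !! (length b + j) = xs ! j" using A[rule_format, of "length b + j"] j by (simp add: nth_append)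
  qed
  note eqv = this
  show ?thesis
  proof (rule set_eqI)
    fix \<omega> :: "'a stream"
    have "\<omega> \<in> sstart UNIV h \<inter> sdrop (length h - 1) -` sstart UNIV xs \<longleftrightarrow> ?L \<omega>"
      using h by (simp add: sstart_eq sdrop_snth)
    also have "\<dots> \<longleftrightarrow> ?R \<omega>" by (rule eqv)
    also have "\<dots> \<longleftrightarrow> \<omega> \<in> sstart UNIV (butlast h @ xs)" using h by (simp add: sstart_eq)
    finally show "\<omega> \<in> sstart UNIV h \<inter> sdrop (length h - 1) -` sstart UNIV xs \<longleftrightarrow> \<omega> \<in> sstart UNIV (butlast h @ xs)" .
  qed
qed

lemma sstart_shift_empty:
  assumes "h \<noteq> []" "xs \<noteq> []" "hd xs \<noteq> last h"
  shows "sstart UNIV h \<inter> sdrop (length h - 1) -` sstart UNIV xs = {}"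
proof safe
  fix \<omega> assume A: "\<omega> \<in> sstart UNIV h" "sdrop (length h - 1) \<omega> \<in> sstart UNIV xs"
  have "\<omega> !! (length h - 1) = h ! (length h - 1)" using A(1) assms(1) by (auto simp: sstart_eq)
  moreover have "\<omega> !! (length h - 1) = xs ! 0" using A(2) assms(2) sdrop_snth[of "length h - 1" \<omega> 0]
    by (auto simp: sstart_eq)
  ultimately show "\<omega> \<in> {}" using assms by (simp add: last_conv_nth hd_conv_nth)
qed

lemma streams_sets_sigma:
  "sets (stream_space (count_space (UNIV::'v::countable set))) = sigma_sets UNIV (sstart UNIV ` UNIV \<union> {{}})"
  using sets_stream_space_sstart[of "UNIV::'v set"] by (simp add: sets_measure_of_conv)

lemma stream_measure_eqI:
  fixes M N :: "'v::countable stream measure"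
  assumes "finite_measure M" "finite_measure N"
    and sM: "sets M = sets (stream_space (count_space UNIV))" and sN: "sets N = sets (stream_space (count_space UNIV))"
    and eq: "\<And>xs. emeasure M (sstart UNIV xs) = emeasure N (sstart UNIV xs)"
  shows "M = N"
proof (rule measure_eqI_generator_eq[where \<Omega>=UNIV and E="sstart (UNIV::'v set) ` UNIV \<union> {{}}" and A="\<lambda>_. UNIV"])
  show "Int_stable (sstart (UNIV::'v set) ` UNIV \<union> {{}})" using Int_stable_sstart[of "UNIV::'v set"] by (metis lists_UNIV)
  show "sets M = sigma_sets UNIV (sstart (UNIV::'v set) ` UNIV \<union> {{}})" using sM streams_sets_sigma by simp
  show "sets N = sigma_sets UNIV (sstart (UNIV::'v set) ` UNIV \<union> {{}})" using sN streams_sets_sigma by simp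
  show "range (\<lambda>_. UNIV) \<subseteq> sstart (UNIV::'v set) ` UNIV \<union> {{}}"
    by (auto intro!: image_eqI[where x="[]"])
  show "emeasure M UNIV \<noteq> \<infinity>" for i :: nat
    using finite_measure.emeasure_finite[OF assms(1), of UNIV] by simp
qed (use eq in auto)


lemma sdrop_pre_sets:
  "X \<in> sets (stream_space (count_space UNIV)) \<Longrightarrow> sdrop n -` X \<in> sets (stream_space (count_space UNIV))"
  using measurable_sets[OF measurable_sdrop, of X "count_space UNIV" n] by (simp add: space_stream_space)

context
  fixes VM :: "'v::finite set" and P :: "'v \<Rightarrow> 'v pmf"
begin

lemma run_shift:
  assumes h: "h \<noteq> []" and B: "B \<in> sets (stream_space (count_space UNIV))"
  shows "emeasure (RM VM P \<sigma> s) (sstart UNIV h \<inter> sdrop (length h - 1) -` B) =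
    ennreal (cp VM P \<sigma> s h) * emeasure (RM VM P (\<lambda>l. \<sigma> (butlast h @ l)) (last h)) B"
proof -
  let ?M1 = "RM VM P \<sigma> s" and ?M2 = "RM VM P (\<lambda>l. \<sigma> (butlast h @ l)) (last h)"
  let ?C = "sstart UNIV h" and ?n = "length h - 1"
  let ?S = "stream_space (count_space (UNIV::'v set))"
  define N1 where "N1 = distr (density ?M1 (indicator ?C)) ?S (sdrop ?n)"
  define N2 where "N2 = density ?M2 (\<lambda>_. ennreal (cp VM P \<sigma> s h))"
  have Cs: "?C \<in> sets ?M1" by (simp add: run_sets sstart_sets)
  have msd: "sdrop ?n \<in> measurable (density ?M1 (indicator ?C)) ?S"
    by (simp add: measurable_cong_sets[OF run_sets refl])
  have eN1: "emeasure N1 X = emeasure ?M1 (?C \<inter> sdrop ?n -` X)" if X: "X \<in> sets ?S" for X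
  proof -
    have "emeasure N1 X = emeasure (density ?M1 (indicator ?C)) (sdrop ?n -` X)"
      unfolding N1_def using emeasure_distr[OF msd X] by simp
    also have "\<dots> = (\<integral>\<^sup>+\<omega>. indicator ?C \<omega> * indicator (sdrop ?n -` X) \<omega> \<partial>?M1)"
      using X by (subst emeasure_density) (auto simp: run_sets sdrop_pre_sets)
    also have "\<dots> = (\<integral>\<^sup>+\<omega>. indicator (?C \<inter> sdrop ?n -` X) \<omega> \<partial>?M1)"
      by (intro nn_integral_cong) (simp split: split_indicator)
    also have "\<dots> = emeasure ?M1 (?C \<inter> sdrop ?n -` X)"
      using X by (intro nn_integral_indicator) (simp add: run_sets sets.Int sstart_sets sdrop_pre_sets)
    finally show ?thesis .
  qed
  have eN2: "emeasure N2 X = ennreal (cp VM P \<sigma> s h) * emeasure ?M2 X" if X: "X \<in> sets ?S" for X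
    unfolding N2_def using X by (intro emeasure_density_const) (simp add: run_sets)
  have UNIV_S: "UNIV \<in> sets ?S" using sets.top[of ?S] by (simp add: space_stream_space)
  have "N1 = N2"
  proof (rule stream_measure_eqI)
    show "sets N1 = sets ?S" by (simp add: N1_def)
    show "sets N2 = sets ?S" by (simp add: N2_def run_sets)
    have "emeasure N1 (space N1) = emeasure N1 UNIV" by (simp add: N1_def space_stream_space)
    also have "\<dots> \<le> emeasure ?M1 UNIV" using eN1[of UNIV] UNIV_S by (simp add: emeasure_mono run_sets)
    also have "\<dots> < \<infinity>" using prob_space.emeasure_space_1[OF run_prob[of VM P \<sigma> s]] by simp
    finally show "finite_measure N1" by (intro finite_measureI) simp
    have "emeasure N2 (space N2) = ennreal (cp VM P \<sigma> s h) * emeasure ?M2 UNIV"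
      using eN2[of UNIV] UNIV_S by (simp add: N2_def)
    also have "\<dots> < \<infinity>" using prob_space.emeasure_space_1[OF run_prob[of VM P _ "last h"]] by simp
    finally show "finite_measure N2" by (intro finite_measureI) simp
    fix xs :: "'v list"
    show "emeasure N1 (sstart UNIV xs) = emeasure N2 (sstart UNIV xs)"
    proof -
      have "emeasure N1 (sstart UNIV xs) = emeasure ?M1 (?C \<inter> sdrop ?n -` sstart UNIV xs)"
        by (rule eN1) (rule sstart_sets)
      also have "\<dots> = ennreal (cp VM P \<sigma> s h) * emeasure ?M2 (sstart UNIV xs)"
      proof (cases "xs = []")
        case True
        then show ?thesis using run_cyl[of VM P \<sigma> s h] run_cyl[of VM P _ "last h" "[]"] by (simp add: cp_def)
      next
        case False
        show ?thesis
        proof (cases "hd xs = last h")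
          case True
          have "emeasure ?M1 (?C \<inter> sdrop ?n -` sstart UNIV xs) = emeasure ?M1 (sstart UNIV (butlast h @ xs))"
            using sstart_shift[OF h False True] by simp
          also have "\<dots> = ennreal (cp VM P \<sigma> s (butlast h @ xs))" by (rule run_cyl)
          also have "\<dots> = ennreal (cp VM P \<sigma> s h) * ennreal (cp VM P (\<lambda>l. \<sigma> (butlast h @ l)) (last h) xs)"
            unfolding cp_append[OF h False True] by (rule ennreal_mult[OF cp_nonneg cp_nonneg])
          finally show ?thesis by (simp add: run_cyl)
        next
          case hne: False
          then show ?thesis using sstart_shift_empty[OF h False hne] run_cyl[of VM P _ "last h" xs] False
            by (simp add: cp_def)
        qed
      qed
      also have "\<dots> = emeasure N2 (sstart UNIV xs)" by (rule eN2[symmetric]) (rule sstart_sets)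
      finally show ?thesis .
    qed
  qed
  then show ?thesis using eN1[OF B] eN2[OF B] by simp
qed

end




definition Dset :: "nat \<Rightarrow> 'v list set \<Rightarrow> 'v stream set" where
  "Dset n L = {\<omega>. stake n \<omega> \<in> L}"

definition sdiff :: "'a set \<Rightarrow> 'a set \<Rightarrow> 'a set" where
  "sdiff A B = (A - B) \<union> (B - A)"

lemma Dset_sets: "Dset n L \<in> sets (stream_space (count_space (UNIV::'v::countable set)))"
  using measurable_sets[OF measurable_stake, of L n] by (simp add: Dset_def space_stream_space vimage_def)

lemma Dset_lift: "n \<le> m \<Longrightarrow> Dset n L = Dset m {l. take n l \<in> L}"
  by (auto simp: Dset_def take_stake min_def)

locale smeas = finite_measure M for M :: "'v::countable stream measure" +
  assumes sM: "sets M = sets (stream_space (count_space UNIV))"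
begin

lemma spM[simp]: "space M = UNIV"
  using sets_eq_imp_space_eq[OF sM] by (simp add: space_stream_space)

lemma D_in[measurable]: "Dset n L \<in> sets M"
  using Dset_sets by (simp add: sM)

definition Q :: "'v stream set \<Rightarrow> bool" where
  "Q A \<longleftrightarrow> (\<forall>e>0. \<exists>n L. measure M (sdiff A (Dset n L)) < e)"

lemma Q_union:
  fixes A :: "nat \<Rightarrow> 'v stream set"
  assumes dis: "disjoint_family A" and As: "range A \<subseteq> sets M" and QA: "\<And>i. Q (A i)"
  shows "Q (\<Union>i. A i)"
  unfolding Q_def
proof safe
  fix e :: real assume e: "e > 0"
  let ?U = "\<Union>i. A i"
  define F where "F k = (\<Union>i<k. A i)" for k
  have Fs: "F k \<in> sets M" for k using As unfolding F_def by auto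
  have Us: "?U \<in> sets M" using As by auto
  have "(\<lambda>k. measure M (F k)) \<longlonglongrightarrow> measure M (\<Union>k. F k)"
  proof (rule finite_Lim_measure_incseq)
    show "incseq F" unfolding incseq_def F_def by (intro allI impI UN_mono) auto
  qed (use Fs in auto)
  moreover have "(\<Union>k. F k) = ?U" by (auto simp: F_def)
  ultimately have "(\<lambda>k. measure M (F k)) \<longlonglongrightarrow> measure M ?U" by simp
  then have "eventually (\<lambda>k. measure M ?U - e/2 < measure M (F k)) sequentially"
    by (rule order_tendstoD) (use e in simp)
  then obtain N where N: "measure M ?U - e/2 < measure M (F N)"
    by (auto simp: eventually_sequentially)
  have "\<forall>i. \<exists>n L. measure M (sdiff (A i) (Dset n L)) < e / (2 * (N + 1))"
    using QA e unfolding Q_def by (auto intro!: divide_pos_pos)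
  then obtain nn LL where nnLL: "\<And>i. measure M (sdiff (A i) (Dset (nn i) (LL i))) < e / (2 * (N + 1))"
    by metis
  define m where "m = (\<Sum>i<N. nn i)"
  have nm: "i < N \<Longrightarrow> nn i \<le> m" for i unfolding m_def by (rule member_le_sum) auto
  define L where "L = (\<Union>i<N. {l. take (nn i) l \<in> LL i})"
  have B: "Dset m L = (\<Union>i<N. Dset (nn i) (LL i))"
    using Dset_lift[OF nm] by (auto simp: L_def Dset_def)
  have sub: "sdiff ?U (Dset m L) \<subseteq> (\<Union>i<N. sdiff (A i) (Dset (nn i) (LL i))) \<union> (?U - F N)"
  proof
    fix x assume x: "x \<in> sdiff ?U (Dset m L)"
    show "x \<in> (\<Union>i<N. sdiff (A i) (Dset (nn i) (LL i))) \<union> (?U - F N)"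
    proof (cases "x \<in> ?U")
      case True
      then obtain j where j: "x \<in> A j" by auto
      have nB: "x \<notin> Dset m L" using x True by (auto simp: sdiff_def)
      show ?thesis
      proof (cases "j < N")
        case True then show ?thesis using nB j B by (auto simp: sdiff_def)
      next
        case False
        have "x \<notin> F N"
        proof
          assume "x \<in> F N"
          then obtain i where "i < N" "x \<in> A i" by (auto simp: F_def)
          moreover have "i \<noteq> j" using \<open>i < N\<close> False by auto
          ultimately show False using j dis unfolding disjoint_family_on_def by blast
        qed
        then show ?thesis using j by auto
      qed
    next
      case False
      then have "x \<in> Dset m L" using x by (auto simp: sdiff_def)
      then show ?thesis using B False by (auto simp: sdiff_def)
    qed
  qed
  have sds: "sdiff X Y \<in> sets M" if "X \<in> sets M" "Y \<in> sets M" for X Y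
    using that by (auto simp: sdiff_def)
  have "measure M (sdiff ?U (Dset m L)) \<le> measure M ((\<Union>i<N. sdiff (A i) (Dset (nn i) (LL i))) \<union> (?U - F N))"
    by (rule finite_measure_mono[OF sub]) (use As Us Fs sds in auto)
  also have "\<dots> \<le> measure M (\<Union>i<N. sdiff (A i) (Dset (nn i) (LL i))) + measure M (?U - F N)"
    by (rule measure_Un_le) (use As Us Fs sds in auto)
  also have "measure M (\<Union>i<N. sdiff (A i) (Dset (nn i) (LL i))) \<le> (\<Sum>i<N. measure M (sdiff (A i) (Dset (nn i) (LL i))))"
    by (rule finite_measure_subadditive_finite) (use As sds in auto)
  also have "\<dots> \<le> (\<Sum>i<N. e / (2 * (N + 1)))"
    by (rule sum_mono) (use nnLL in \<open>simp add: less_imp_le\<close>)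
  also have "\<dots> = N * (e / (2 * (N + 1)))" by simp
  also have "\<dots> \<le> e / 2"
    using e by (simp add: field_simps)
  also have "measure M (?U - F N) = measure M ?U - measure M (F N)"
    by (rule finite_measure_Diff) (use Us Fs in \<open>auto simp: F_def\<close>)
  finally show "\<exists>n L. measure M (sdiff ?U (Dset n L)) < e"
    using N by (intro exI[of _ m] exI[of _ L]) simp
qed

lemma approx:
  assumes A: "A \<in> sets M" and e: "e > 0"
  shows "\<exists>n L. measure M (sdiff A (Dset n L)) < e"
proof -
  have A': "A \<in> sigma_sets UNIV (sstart (UNIV::'v set) ` UNIV \<union> {{}})"
    using A sM streams_sets_sigma by metis
  have IS: "Int_stable (sstart (UNIV::'v set) ` UNIV \<union> {{}})"
    using Int_stable_sstart[of "UNIV::'v set"] by (metis lists_UNIV)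
  have CL: "sstart (UNIV::'v set) ` UNIV \<union> {{}} \<subseteq> Pow UNIV" by auto
  from IS CL A' have "Q A"
  proof (induction rule: sigma_sets_induct_disjoint)
    case (basic A)
    then show ?case
    proof
      assume "A \<in> sstart UNIV ` UNIV"
      then obtain xs where xs: "A = sstart UNIV xs" by auto
      have "Dset (length xs) {xs} = A" by (auto simp: xs Dset_def sstart_UNIV)
      then show "Q A" unfolding Q_def by (intro allI impI exI[of _ "length xs"] exI[of _ "{xs}"]) (simp add: sdiff_def)
    next
      assume "A \<in> {{}}"
      then have "Dset 0 {} = A" by (auto simp: Dset_def)
      then show "Q A" unfolding Q_def by (intro allI impI exI[of _ 0] exI[of _ "{}"]) (simp only: sdiff_def, simp)
    qed
  next
    case empty
    have "Dset 0 {} = ({}::'v stream set)" by (auto simp: Dset_def)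
    then show ?case unfolding Q_def by (intro allI impI exI[of _ 0] exI[of _ "{}"]) (simp only: sdiff_def, simp)
  next
    case (compl A)
    show ?case unfolding Q_def
    proof safe
      fix e :: real assume "e > 0"
      then obtain n L where "measure M (sdiff A (Dset n L)) < e" using compl unfolding Q_def by auto
      moreover have "sdiff (UNIV - A) (Dset n (UNIV - L)) = sdiff A (Dset n L)"
        by (auto simp: sdiff_def Dset_def)
      ultimately show "\<exists>n L. measure M (sdiff (UNIV - A) (Dset n L)) < e" by metis
    qed
  next
    case (union A)
    have "range A \<subseteq> sets M" using union(2) sM streams_sets_sigma by metis
    then show ?case using Q_union union by blast
  qed
  then show ?thesis using e unfolding Q_def by blast
qed

end




lemma measure_shift:
  fixes VM :: "'v::finite set"
  assumes h: "h \<noteq> []" and B: "B \<in> sets (stream_space (count_space UNIV))"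
  shows "measure (RM VM P \<sigma> s) (sstart UNIV h \<inter> sdrop (length h - 1) -` B) =
    cp VM P \<sigma> s h * measure (RM VM P (\<lambda>l. \<sigma> (butlast h @ l)) (last h)) B"
  using run_shift[OF h B, of VM P \<sigma> s] by (simp add: measure_def enn2real_mult cp_nonneg)

lemma measure_cyl: "measure (RM VM P \<sigma> s) (sstart UNIV h) = cp VM P \<sigma> (s::'v::finite) h"
  using run_cyl[of VM P \<sigma> s h] by (simp add: measure_def cp_nonneg)

lemma strategy_app: "strategy E VM \<sigma> \<Longrightarrow> strategy E VM (\<lambda>l. \<sigma> (b @ l))"
  unfolding strategy_def
proof (intro allI impI)
  fix h assume A: "\<forall>h. h \<noteq> [] \<and> last h \<in> VM \<longrightarrow> set_pmf (\<sigma> h) \<subseteq> E `` {last h}" and h: "h \<noteq> [] \<and> last h \<in> VM"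
  then have "set_pmf (\<sigma> (b @ h)) \<subseteq> E `` {last (b @ h)}" by (intro A[rule_format]) auto
  then show "set_pmf (\<sigma> (b @ h)) \<subseteq> E `` {last h}" using h by simp
qed

lemma sdrop_tail:
  assumes "\<forall>\<omega>. \<omega> \<in> Ob \<longleftrightarrow> stl \<omega> \<in> Ob"
  shows "\<omega> \<in> Ob \<longleftrightarrow> sdrop n \<omega> \<in> Ob"
proof (induction n arbitrary: \<omega>)
  case (Suc n)
  then show ?case using assms by (simp add: sdrop_stl[symmetric])
qed simp

locale game =
  fixes E :: "('v::finite \<times> 'v) set" and VM :: "'v set" and P :: "'v \<Rightarrow> 'v pmf"
  assumes mdp: "mdp E VM P"
begin

abbreviation "S \<equiv> {\<sigma>. strategy E VM \<sigma>}"
abbreviation "V \<equiv> Val E VM P"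

lemma S_ne: "S \<noteq> {}"
proof -
  have "\<forall>s. \<exists>t. (s, t) \<in> E" using mdp by (simp add: mdp_def)
  then have "strategy E VM (\<lambda>h. return_pmf (SOME t. (last h, t) \<in> E))"
    unfolding strategy_def by (auto intro: someI_ex)
  then show ?thesis by blast
qed

lemma meas_le1: "measure (RM VM P \<sigma> s) X \<le> 1"
  using prob_space.prob_le_1[OF run_prob] .

lemma bdd: "bdd_above ((\<lambda>\<sigma>. measure (RM VM P \<sigma> s) X) ` S)"
  using meas_le1 by (auto intro!: bdd_aboveI)

lemma Val_ge: "strategy E VM \<sigma> \<Longrightarrow> measure (RM VM P \<sigma> s) X \<le> V X s"
  unfolding Val_def by (rule cSUP_upper) (auto simp: bdd)

lemma Val_le: "(\<And>\<sigma>. strategy E VM \<sigma> \<Longrightarrow> measure (RM VM P \<sigma> s) X \<le> c) \<Longrightarrow> V X s \<le> c"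
  unfolding Val_def by (rule cSUP_least) (use S_ne in auto)

lemma Val_le1: "V X s \<le> 1"
  using Val_le meas_le1 by blast

lemma Val_nonneg: "0 \<le> V X s"
proof -
  obtain \<sigma> where "strategy E VM \<sigma>" using S_ne by auto
  then show ?thesis using Val_ge[of \<sigma> s X] by (simp add: order_trans[OF measure_nonneg])
qed

lemma Reach_sets: "Reach W \<in> sets (stream_space (count_space (UNIV::'v set)))"
proof -
  have "Reach W = (\<Union>i. (\<lambda>w. w !! i) -` W \<inter> space (stream_space (count_space (UNIV::'v set))))"
    by (auto simp: Reach_def space_stream_space)
  also have "\<dots> \<in> sets (stream_space (count_space (UNIV::'v set)))"
    by (intro sets.countable_UN measurable_sets[OF measurable_snth]) auto
  finally show ?thesis .
qed

end




locale game_obj = game E VM P for E :: "('v::finite \<times> 'v) set" and VM P +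
  fixes Ob :: "'v stream set"
  assumes tail: "\<forall>\<omega>. \<omega> \<in> Ob \<longleftrightarrow> stl \<omega> \<in> Ob"
    and Obm: "Ob \<in> sets (stream_space (count_space UNIV))"
begin

definition "W = {t. V Ob t = 1}"
definition "c = Max (insert 0 (V Ob ` (- W)))"
definition "A = Ob - Reach W"

lemma c_props: "0 \<le> c" "c < 1" "t \<notin> W \<Longrightarrow> V Ob t \<le> c"
proof -
  have fin: "finite (insert 0 (V Ob ` (- W)))" by simp
  show "0 \<le> c" unfolding c_def using fin by (intro Max_ge) auto
  show "t \<notin> W \<Longrightarrow> V Ob t \<le> c" unfolding c_def using fin by (intro Max_ge) auto
  have "c \<in> insert 0 (V Ob ` (- W))" unfolding c_def using fin by (intro Max_in) auto
  then show "c < 1" using Val_le1[of Ob] by (auto simp: W_def less_le)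
qed

lemma A_sets: "A \<in> sets (stream_space (count_space UNIV))"
  unfolding A_def using Obm Reach_sets by auto

lemma notReach_shift:
  assumes "\<forall>i\<le>n. \<omega> !! i \<notin> W"
  shows "\<omega> \<notin> Reach W \<longleftrightarrow> sdrop n \<omega> \<notin> Reach W"
proof
  assume "\<omega> \<notin> Reach W" then show "sdrop n \<omega> \<notin> Reach W" by (auto simp: Reach_def sdrop_snth)
next
  assume A: "sdrop n \<omega> \<notin> Reach W"
  show "\<omega> \<notin> Reach W"
  proof
    assume "\<omega> \<in> Reach W"
    then obtain i where i: "\<omega> !! i \<in> W" by (auto simp: Reach_def)
    show False
    proof (cases "i \<le> n")
      case True then show ?thesis using assms i by auto
    next
      case False
      then have "sdrop n \<omega> !! (i - n) \<in> W" using i by (simp add: sdrop_snth)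
      then show ?thesis using A by (auto simp: Reach_def)
    qed
  qed
qed

lemma claim1:
  assumes \<sigma>: "strategy E VM \<sigma>" and h: "h \<noteq> []"
  shows "measure (RM VM P \<sigma> s) (A \<inter> sstart UNIV h) \<le> c * cp VM P \<sigma> s h"
proof (cases "\<exists>i<length h. h ! i \<in> W")
  case True
  then obtain i where i: "i < length h" "h ! i \<in> W" by auto
  have "A \<inter> sstart UNIV h = {}"
    using i by (auto simp: A_def Reach_def sstart_eq) (metis i(1))
  then show ?thesis using c_props(1) cp_nonneg[of VM P \<sigma> s h] by simp
next
  case False
  let ?n = "length h - 1"
  have eq: "A \<inter> sstart UNIV h = sstart UNIV h \<inter> sdrop ?n -` A"
  proof (intro set_eqI iffI)
    fix \<omega> assume "\<omega> \<in> A \<inter> sstart UNIV h"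
    then have w: "\<omega> \<in> A" "\<forall>i<length h. \<omega> !! i = h ! i" by (auto simp: sstart_eq)
    then have "\<forall>i\<le>?n. \<omega> !! i \<notin> W" using False h by (metis Suc_pred' length_greater_0_conv less_Suc_eq_le)
    then show "\<omega> \<in> sstart UNIV h \<inter> sdrop ?n -` A"
      using w notReach_shift sdrop_tail[OF tail] by (auto simp: A_def sstart_eq)
  next
    fix \<omega> assume "\<omega> \<in> sstart UNIV h \<inter> sdrop ?n -` A"
    then have w: "sdrop ?n \<omega> \<in> A" "\<forall>i<length h. \<omega> !! i = h ! i" by (auto simp: sstart_eq)
    then have "\<forall>i\<le>?n. \<omega> !! i \<notin> W" using False h by (metis Suc_pred' length_greater_0_conv less_Suc_eq_le)
    then show "\<omega> \<in> A \<inter> sstart UNIV h"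
      using w notReach_shift[of ?n \<omega>] sdrop_tail[OF tail, of \<omega> ?n] by (auto simp: A_def sstart_eq)
  qed
  have lW: "last h \<notin> W" using False h by (simp add: last_conv_nth)
  let ?\<sigma>' = "\<lambda>l. \<sigma> (butlast h @ l)"
  have "measure (RM VM P \<sigma> s) (A \<inter> sstart UNIV h) = cp VM P \<sigma> s h * measure (RM VM P ?\<sigma>' (last h)) A"
    unfolding eq by (rule measure_shift[OF h A_sets])
  also have "\<dots> \<le> cp VM P \<sigma> s h * c"
  proof (rule mult_left_mono[OF _ cp_nonneg])
    have "measure (RM VM P ?\<sigma>' (last h)) A \<le> measure (RM VM P ?\<sigma>' (last h)) Ob"
      by (rule finite_measure.finite_measure_mono[OF prob_space.finite_measure[OF run_prob]])
         (auto simp: A_def run_sets Obm)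
    also have "\<dots> \<le> V Ob (last h)" by (rule Val_ge[OF strategy_app[OF \<sigma>]])
    also have "\<dots> \<le> c" by (rule c_props(3)[OF lW])
    finally show "measure (RM VM P ?\<sigma>' (last h)) A \<le> c" .
  qed
  finally show ?thesis by (simp add: mult.commute)
qed

lemma A_null:
  assumes \<sigma>: "strategy E VM \<sigma>"
  shows "measure (RM VM P \<sigma> s) A = 0"
proof -
  let ?M = "RM VM P \<sigma> s"
  interpret smeas ?M
    by (intro smeas.intro prob_space.finite_measure[OF run_prob] smeas_axioms.intro run_sets)
  have As: "A \<in> sets ?M" using A_sets by (simp add: run_sets)
  have key: "(1 - c) * measure ?M A \<le> 0 + e" if e: "e > 0" for e
  proof -
    obtain n L where nL: "measure ?M (sdiff A (Dset n L)) < e/2"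
      using approx[OF As, of "e/2"] e by auto
    let ?U = "Dset n L"
    define L1 where "L1 = {l. take n l \<in> L \<and> length l = Suc n}"
    have U: "?U = (\<Union>h\<in>L1. sstart UNIV h)"
    proof (intro set_eqI iffI)
      fix \<omega> assume "\<omega> \<in> ?U"
      then have "stake (Suc n) \<omega> \<in> L1" by (simp add: L1_def Dset_def take_stake del: stake.simps)
      moreover have "\<omega> \<in> sstart UNIV (stake (Suc n) \<omega>)" by (simp add: sstart_UNIV)
      ultimately show "\<omega> \<in> (\<Union>h\<in>L1. sstart UNIV h)" by blast
    next
      fix \<omega> assume "\<omega> \<in> (\<Union>h\<in>L1. sstart UNIV h)"
      then obtain h where "h \<in> L1" "\<omega> \<in> sstart UNIV h" by blast
      then have "h \<in> L1" "stake (Suc n) \<omega> = h" by (auto simp: sstart_UNIV L1_def simp del: stake.simps)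
      then show "\<omega> \<in> ?U" by (auto simp: L1_def Dset_def take_stake simp del: stake.simps)
    qed
    have finL1: "finite L1"
      by (rule finite_subset[OF _ finite_lists_length_eq[OF finite[of UNIV], of "Suc n"]]) (auto simp: L1_def)
    have disj: "disjoint_family_on (\<lambda>h. A \<inter> sstart UNIV h) L1"
      by (auto simp: disjoint_family_on_def L1_def sstart_UNIV)
    have disj2: "disjoint_family_on (\<lambda>h. sstart UNIV h) L1"
      by (auto simp: disjoint_family_on_def L1_def sstart_UNIV)
    have ne: "h \<in> L1 \<Longrightarrow> h \<noteq> []" for h by (auto simp: L1_def)
    have "measure ?M (A \<inter> ?U) = measure ?M (\<Union>h\<in>L1. A \<inter> sstart UNIV h)"
      by (simp add: U)
    also have "\<dots> = (\<Sum>h\<in>L1. measure ?M (A \<inter> sstart UNIV h))"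
      by (rule finite_measure_finite_Union[OF finL1 _ disj]) (use As in \<open>auto simp: sM sstart_sets\<close>)
    also have "\<dots> \<le> (\<Sum>h\<in>L1. c * cp VM P \<sigma> s h)"
      by (rule sum_mono) (rule claim1[OF \<sigma> ne])
    also have "\<dots> = c * (\<Sum>h\<in>L1. measure ?M (sstart UNIV h))"
      by (simp add: sum_distrib_left measure_cyl)
    also have "(\<Sum>h\<in>L1. measure ?M (sstart UNIV h)) = measure ?M ?U"
      unfolding U by (rule finite_measure_finite_Union[OF finL1 _ disj2, symmetric]) (auto simp: sM sstart_sets)
    finally have AU: "measure ?M (A \<inter> ?U) \<le> c * measure ?M ?U" .
    have sdA: "measure ?M (A - ?U) \<le> e/2"
      using nL finite_measure_mono[of "A - ?U" "sdiff A ?U"] As by (auto simp: sdiff_def)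
    have sdU: "measure ?M (?U - A) \<le> e/2"
      using nL finite_measure_mono[of "?U - A" "sdiff A ?U"] As by (auto simp: sdiff_def)
    have "measure ?M A \<le> measure ?M (A \<inter> ?U) + measure ?M (A - ?U)"
    proof -
      have "A = (A \<inter> ?U) \<union> (A - ?U)" by blast
      then have "measure ?M A = measure ?M ((A \<inter> ?U) \<union> (A - ?U))" by simp
      also have "\<dots> \<le> measure ?M (A \<inter> ?U) + measure ?M (A - ?U)"
        by (rule measure_Un_le) (use As in auto)
      finally show ?thesis .
    qed
    moreover have "measure ?M ?U \<le> measure ?M A + measure ?M (?U - A)"
    proof -
      have "measure ?M ?U \<le> measure ?M (A \<union> (?U - A))"
        by (rule finite_measure_mono) (use As in auto)
      also have "\<dots> \<le> measure ?M A + measure ?M (?U - A)"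
        by (rule measure_Un_le) (use As in auto)
      finally show ?thesis .
    qed
    ultimately have "measure ?M A \<le> c * (measure ?M A + e/2) + e/2"
      using AU sdA sdU c_props(1) by (smt (verit) mult_left_mono)
    then have "(1 - c) * measure ?M A \<le> (c + 1) * (e/2)" by (simp add: algebra_simps)
    also have "\<dots> \<le> 2 * (e/2)" using c_props(2) e by (intro mult_right_mono) auto
    finally show ?thesis by simp
  qed
  have "(1 - c) * measure ?M A \<le> 0" by (rule field_le_epsilon) (rule key)
  then have "measure ?M A \<le> 0" using c_props(2) by (simp add: mult_le_0_iff)
  then show ?thesis using measure_nonneg[of ?M A] by linarith
qed

lemma le_dir: "V Ob s \<le> V (Reach W) s"
proof (rule Val_le)
  fix \<sigma> assume \<sigma>: "strategy E VM \<sigma>"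
  let ?M = "RM VM P \<sigma> s"
  interpret finite_measure ?M by (rule prob_space.finite_measure[OF run_prob])
  have "measure ?M Ob \<le> measure ?M (Reach W \<union> A)"
    by (rule finite_measure_mono) (use A_sets Reach_sets Obm in \<open>auto simp: A_def run_sets\<close>)
  also have "\<dots> \<le> measure ?M (Reach W) + measure ?M A"
    by (rule measure_Un_le) (use A_sets Reach_sets in \<open>auto simp: run_sets\<close>)
  also have "\<dots> = measure ?M (Reach W)" using A_null[OF \<sigma>] by simp
  also have "\<dots> \<le> V (Reach W) s" by (rule Val_ge[OF \<sigma>])
  finally show "measure ?M Ob \<le> V (Reach W) s" .
qed

end




context game_obj
begin

definition "hit g \<longleftrightarrow> (\<exists>k<length g. g ! k \<in> W)"
definition "fk g = (LEAST k. k < length g \<and> g ! k \<in> W)"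
definition "H = {h. h \<noteq> [] \<and> last h \<in> W \<and> (\<forall>i<length h - 1. h ! i \<notin> W)}"

lemma fk_props:
  assumes "hit g"
  shows "fk g < length g" "g ! fk g \<in> W" "\<And>i. i < fk g \<Longrightarrow> g ! i \<notin> W"
proof -
  obtain k where k: "k < length g \<and> g ! k \<in> W" using assms by (auto simp: hit_def)
  show "fk g < length g" "g ! fk g \<in> W"
    using LeastI[of "\<lambda>k. k < length g \<and> g ! k \<in> W", OF k] by (auto simp: fk_def)
  fix i assume i: "i < fk g"
  then have "\<not> (i < length g \<and> g ! i \<in> W)" unfolding fk_def by (rule not_less_Least)
  moreover have "i < length g" using i \<open>fk g < length g\<close> by simp
  ultimately show "g ! i \<notin> W" by simp
qed

lemma fk_eq:
  assumes "k < length g" "g ! k \<in> W" "\<And>i. i < k \<Longrightarrow> g ! i \<notin> W"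
  shows "fk g = k"
  unfolding fk_def
proof (rule Least_equality)
  show "k < length g \<and> g ! k \<in> W" using assms by simp
  fix y assume "y < length g \<and> g ! y \<in> W"
  then show "k \<le> y" using assms(3) by (meson not_le)
qed

lemma Reach_H: "Reach W = (\<Union>h\<in>H. sstart UNIV h)"
proof (intro set_eqI iffI)
  fix \<omega> assume "\<omega> \<in> Reach W"
  then obtain i where i: "\<omega> !! i \<in> W" by (auto simp: Reach_def)
  define k where "k = (LEAST k. \<omega> !! k \<in> W)"
  have k: "\<omega> !! k \<in> W" using LeastI[of "\<lambda>k. \<omega> !! k \<in> W", OF i] by (simp add: k_def)
  have nk: "j < k \<Longrightarrow> \<omega> !! j \<notin> W" for j unfolding k_def by (rule not_less_Least)
  have "stake (Suc k) \<omega> \<in> H"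
    using k nk by (auto simp: H_def last_conv_nth simp del: stake.simps)
  moreover have "\<omega> \<in> sstart UNIV (stake (Suc k) \<omega>)" by (simp add: sstart_UNIV del: stake.simps)
  ultimately show "\<omega> \<in> (\<Union>h\<in>H. sstart UNIV h)" by blast
next
  fix \<omega> assume "\<omega> \<in> (\<Union>h\<in>H. sstart UNIV h)"
  then obtain h where h: "h \<in> H" "\<omega> \<in> sstart UNIV h" by blast
  then have "\<omega> !! (length h - 1) = last h" by (auto simp: sstart_eq H_def last_conv_nth)
  then show "\<omega> \<in> Reach W" using h unfolding H_def Reach_def by (metis (mono_tags, lifting) mem_Collect_eq)
qed

lemma H_disj: "disjoint_family_on (\<lambda>h. X h \<inter> sstart UNIV h) H"
proof (unfold disjoint_family_on_def, intro ballI impI)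
  fix h1 h2 assume h: "h1 \<in> H" "h2 \<in> H" "h1 \<noteq> h2"
  show "(X h1 \<inter> sstart UNIV h1) \<inter> (X h2 \<inter> sstart UNIV h2) = {}"
  proof (rule ccontr)
    assume "(X h1 \<inter> sstart UNIV h1) \<inter> (X h2 \<inter> sstart UNIV h2) \<noteq> {}"
    then obtain \<omega> where w: "\<forall>i<length h1. \<omega> !! i = h1 ! i" "\<forall>i<length h2. \<omega> !! i = h2 ! i"
      by (auto simp: sstart_eq)
    have c: "length h1 < length h2 \<Longrightarrow> h1 \<in> H \<Longrightarrow> h2 \<in> H \<Longrightarrow> (\<forall>i<length h1. \<omega> !! i = h1 ! i) \<Longrightarrow> (\<forall>i<length h2. \<omega> !! i = h2 ! i) \<Longrightarrow> False" for h1 h2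
    proof -
      assume l: "length h1 < length h2" and h1: "h1 \<in> H" and h2: "h2 \<in> H"
        and w1: "\<forall>i<length h1. \<omega> !! i = h1 ! i" and w2: "\<forall>i<length h2. \<omega> !! i = h2 ! i"
      have "h1 ! (length h1 - 1) \<in> W" using h1 by (auto simp: H_def last_conv_nth)
      moreover have "h1 ! (length h1 - 1) = h2 ! (length h1 - 1)" using w1 w2 l h1 by (auto simp: H_def)
      moreover have "length h1 - 1 < length h2 - 1" using l h1 by (cases h1) (auto simp: H_def)
      then have "h2 ! (length h1 - 1) \<notin> W" using h2 by (auto simp: H_def)
      ultimately show False by simp
    qed
    consider "length h1 < length h2" | "length h2 < length h1" | "length h1 = length h2" by linarith
    then show False
    proof cases
      case 1 then show ?thesis using c h w by blast
    next
      case 2 then show ?thesis using c h w by blast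
    next
      case 3
      then have "h1 = h2" using w by (auto simp: list_eq_iff_nth_eq)
      then show ?thesis using h by simp
    qed
  qed
qed

definition "sw \<tau> \<sigma> g = (if hit g then \<tau> (g ! fk g) (drop (fk g) g) else \<sigma> g)"

lemma sw_strategy:
  assumes \<tau>: "\<forall>t\<in>W. strategy E VM (\<tau> t)" and \<sigma>: "strategy E VM \<sigma>"
  shows "strategy E VM (sw \<tau> \<sigma>)"
  unfolding strategy_def
proof (intro allI impI)
  fix g assume g: "g \<noteq> [] \<and> last g \<in> VM"
  show "set_pmf (sw \<tau> \<sigma> g) \<subseteq> E `` {last g}"
  proof (cases "hit g")
    case True
    note f = fk_props[OF True]
    have "drop (fk g) g \<noteq> []" using f(1) by simp
    moreover have "last (drop (fk g) g) = last g" using f(1) by simp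
    moreover have "strategy E VM (\<tau> (g ! fk g))" using \<tau> f(2) by blast
    ultimately have "set_pmf (\<tau> (g ! fk g) (drop (fk g) g)) \<subseteq> E `` {last g}"
      using g unfolding strategy_def by metis
    then show ?thesis using True by (simp add: sw_def)
  next
    case False
    then show ?thesis using \<sigma> g by (auto simp: sw_def strategy_def)
  qed
qed

lemma sw_prefix:
  assumes h: "h \<in> H" and i: "i < length h - 1"
  shows "sw \<tau> \<sigma> (take (Suc i) h) = \<sigma> (take (Suc i) h)"
proof -
  have "\<not> hit (take (Suc i) h)"
  proof
    assume "hit (take (Suc i) h)"
    then obtain k where "k < length (take (Suc i) h)" "take (Suc i) h ! k \<in> W" by (auto simp: hit_def)
    then have "k < length h - 1" "h ! k \<in> W" using i by auto
    then show False using h by (auto simp: H_def)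
  qed
  then show ?thesis by (simp add: sw_def)
qed

lemma cp_sw:
  assumes h: "h \<in> H"
  shows "cp VM P (sw \<tau> \<sigma>) s h = cp VM P \<sigma> s h"
proof -
  have "path_prob VM P (sw \<tau> \<sigma>) h = path_prob VM P \<sigma> h"
    unfolding path_prob_def next_dist_def using sw_prefix[OF h, of _ \<tau> \<sigma>] by (intro prod.cong) auto
  then show ?thesis by (simp add: cp_def)
qed

lemma sw_after:
  assumes h: "h \<in> H" and g: "g \<noteq> []" "hd g = last h"
  shows "sw \<tau> \<sigma> (butlast h @ g) = \<tau> (last h) g"
proof -
  let ?k = "length (butlast h)"
  have hne: "h \<noteq> []" and lW: "last h \<in> W" and nW: "\<forall>i<length h - 1. h ! i \<notin> W" using h by (auto simp: H_def)
  have at: "(butlast h @ g) ! ?k = last h" using g by (simp add: nth_append hd_conv_nth)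
  have before: "i < ?k \<Longrightarrow> (butlast h @ g) ! i \<notin> W" for i
    using nW by (simp add: nth_append nth_butlast)
  have kl: "?k < length (butlast h @ g)" using g by simp
  have "hit (butlast h @ g)" unfolding hit_def using kl at lW by metis
  moreover have "fk (butlast h @ g) = ?k" by (rule fk_eq[OF kl]) (use at lW before in auto)
  ultimately show ?thesis using at by (simp add: sw_def)
qed

lemma key_h:
  assumes \<tau>: "\<forall>t\<in>W. strategy E VM (\<tau> t) \<and> z < measure (RM VM P (\<tau> t) t) Ob" and z: "0 < z"
    and h: "h \<in> H"
  shows "ennreal z * emeasure (RM VM P \<sigma> s) (sstart UNIV h) \<le> emeasure (RM VM P (sw \<tau> \<sigma>) s) (Ob \<inter> sstart UNIV h)"
proof -
  have hne: "h \<noteq> []" and lW: "last h \<in> W" using h by (auto simp: H_def)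
  let ?n = "length h - 1"
  have eq: "Ob \<inter> sstart UNIV h = sstart UNIV h \<inter> sdrop ?n -` Ob"
    using sdrop_tail[OF tail] by auto
  have "RM VM P (\<lambda>l. sw \<tau> \<sigma> (butlast h @ l)) (last h) = RM VM P (\<tau> (last h)) (last h)"
    by (rule run_cong) (use sw_after[OF h] in auto)
  then have "emeasure (RM VM P (sw \<tau> \<sigma>) s) (Ob \<inter> sstart UNIV h) =
      ennreal (cp VM P \<sigma> s h) * emeasure (RM VM P (\<tau> (last h)) (last h)) Ob"
    unfolding eq using run_shift[OF hne Obm, of VM P "sw \<tau> \<sigma>" s] cp_sw[OF h] by simp
  also have "emeasure (RM VM P (\<tau> (last h)) (last h)) Ob = ennreal (measure (RM VM P (\<tau> (last h)) (last h)) Ob)"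
    by (rule finite_measure.emeasure_eq_measure[OF prob_space.finite_measure[OF run_prob]])
  finally have "emeasure (RM VM P (sw \<tau> \<sigma>) s) (Ob \<inter> sstart UNIV h) =
      ennreal (cp VM P \<sigma> s h) * ennreal (measure (RM VM P (\<tau> (last h)) (last h)) Ob)" .
  moreover have "ennreal (cp VM P \<sigma> s h) * ennreal z \<le> ennreal (cp VM P \<sigma> s h) * ennreal (measure (RM VM P (\<tau> (last h)) (last h)) Ob)"
    using \<tau> lW by (intro mult_left_mono) (auto intro!: ennreal_leI less_imp_le)
  ultimately show ?thesis using run_cyl[of VM P \<sigma> s h] by (simp add: mult.commute)
qed

lemma ge_dir: "V (Reach W) s \<le> V Ob s"
proof (rule field_le_mult_one_interval)
  fix z :: real assume z: "0 < z" "z < 1"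
  have "\<forall>t\<in>W. \<exists>\<tau>. strategy E VM \<tau> \<and> z < measure (RM VM P \<tau> t) Ob"
  proof
    fix t assume "t \<in> W"
    then have "z < V Ob t" using z by (simp add: W_def)
    then show "\<exists>\<tau>. strategy E VM \<tau> \<and> z < measure (RM VM P \<tau> t) Ob"
      unfolding Val_def using less_cSUP_iff[OF S_ne bdd] by auto
  qed
  then obtain \<tau> where \<tau>: "\<forall>t\<in>W. strategy E VM (\<tau> t) \<and> z < measure (RM VM P (\<tau> t) t) Ob"
    by (metis bchoice)
  have "V (Reach W) s \<le> V Ob s / z"
  proof (rule Val_le)
    fix \<sigma> assume \<sigma>: "strategy E VM \<sigma>"
    let ?M = "RM VM P \<sigma> s" and ?M' = "RM VM P (sw \<tau> \<sigma>) s"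
    have st': "strategy E VM (sw \<tau> \<sigma>)" using sw_strategy \<tau> \<sigma> by blast
    have cH: "countable H" by (rule countable_subset[OF subset_UNIV]) simp
    have "ennreal z * emeasure ?M (Reach W) = ennreal z * (\<integral>\<^sup>+h. emeasure ?M (UNIV \<inter> sstart UNIV h) \<partial>count_space H)"
      unfolding Reach_H
      using emeasure_UN_countable[OF _ cH H_disj[of "\<lambda>_. UNIV"], of ?M] by (simp add: run_sets sstart_sets)
    also have "\<dots> = (\<integral>\<^sup>+h. ennreal z * emeasure ?M (sstart UNIV h) \<partial>count_space H)"
      by (simp add: nn_integral_cmult)
    also have "\<dots> \<le> (\<integral>\<^sup>+h. emeasure ?M' (Ob \<inter> sstart UNIV h) \<partial>count_space H)"
      by (intro nn_integral_mono) (use key_h[OF \<tau> z(1)] in auto)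
    also have "\<dots> = emeasure ?M' (\<Union>h\<in>H. Ob \<inter> sstart UNIV h)"
      using emeasure_UN_countable[OF _ cH H_disj[of "\<lambda>_. Ob"], of ?M'] Obm by (simp add: run_sets sstart_sets sets.Int)
    also have "\<dots> \<le> emeasure ?M' Ob"
      by (rule emeasure_mono) (auto simp: run_sets Obm)
    finally have "ennreal z * emeasure ?M (Reach W) \<le> emeasure ?M' Ob" .
    moreover have "emeasure ?M (Reach W) = ennreal (measure ?M (Reach W))"
      by (rule finite_measure.emeasure_eq_measure[OF prob_space.finite_measure[OF run_prob]])
    moreover have "emeasure ?M' Ob = ennreal (measure ?M' Ob)"
      by (rule finite_measure.emeasure_eq_measure[OF prob_space.finite_measure[OF run_prob]])
    ultimately have "ennreal (z * measure ?M (Reach W)) \<le> ennreal (measure ?M' Ob)"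
      using z by (simp add: ennreal_mult)
    then have "z * measure ?M (Reach W) \<le> measure ?M' Ob"
      by (simp add: ennreal_le_iff)
    also have "\<dots> \<le> V Ob s" by (rule Val_ge[OF st'])
    finally show "measure ?M (Reach W) \<le> V Ob s / z" using z by (simp add: field_simps)
  qed
  then show "z * V (Reach W) s \<le> V Ob s" using z by (simp add: field_simps)
qed

theorem main_eq: "V Ob s = V (Reach W) s"
  using le_dir ge_dir by (rule order.antisym)

end




lemma psum_stl:
  "(\<Sum>i\<le>Suc n. r (w !! i)) = r (w !! 0) + (\<Sum>i\<le>n. r (stl w !! i))"
  by (subst sum.atMost_Suc_shift) simp

lemma liminf_stl:
  fixes r :: "'v \<Rightarrow> int"
  shows "liminf (\<lambda>n. ereal (real_of_int (\<Sum>i\<le>n. r (w !! i)))) =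
    ereal (real_of_int (r (w !! 0))) + liminf (\<lambda>n. ereal (real_of_int (\<Sum>i\<le>n. r (stl w !! i))))"
proof -
  let ?f = "\<lambda>n. ereal (real_of_int (\<Sum>i\<le>n. r (w !! i)))"
  have "liminf ?f = liminf (\<lambda>n. ?f (n + 1))" by (rule liminf_shift[symmetric])
  also have "(\<lambda>n. ?f (n + 1)) = (\<lambda>n. ereal (real_of_int (r (w !! 0))) + ereal (real_of_int (\<Sum>i\<le>n. r (stl w !! i))))"
    by (rule ext) (simp only: Suc_eq_plus1[symmetric] psum_stl, simp)
  also have "liminf \<dots> = ereal (real_of_int (r (w !! 0))) + liminf (\<lambda>n. ereal (real_of_int (\<Sum>i\<le>n. r (stl w !! i))))"
    by (rule Liminf_add_ereal_left) auto
  finally show ?thesis .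
qed

lemma LimInf_tail:
  fixes r :: "'v \<Rightarrow> int"
  assumes "\<Delta> \<in> {(=), (\<lambda>x y. x > y), (\<lambda>x y. x < y)}" and "z \<in> {-\<infinity>, \<infinity>}"
  shows "\<forall>\<omega>. \<omega> \<in> LimInf r \<Delta> z \<longleftrightarrow> stl \<omega> \<in> LimInf r \<Delta> z"
proof
  fix \<omega> :: "'v stream"
  define x where "x = liminf (\<lambda>n. ereal (real_of_int (\<Sum>i\<le>n. r (stl \<omega> !! i))))"
  define c where "c = real_of_int (r (\<omega> !! 0))"
  have "\<Delta> (ereal c + x) z \<longleftrightarrow> \<Delta> x z"
    using assms by (cases x) auto
  then show "\<omega> \<in> LimInf r \<Delta> z \<longleftrightarrow> stl \<omega> \<in> LimInf r \<Delta> z"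
    unfolding LimInf_def using liminf_stl[of r \<omega>] by (simp add: x_def c_def)
qed

lemma LimInf_meas:
  fixes r :: "'v::countable \<Rightarrow> int"
  shows "(\<lambda>w. liminf (\<lambda>n. ereal (real_of_int (\<Sum>i\<le>n. r (w !! i))))) \<in> borel_measurable (stream_space (count_space UNIV))"
proof -
  have [measurable]: "(\<lambda>x. real_of_int (r (x !! i))) \<in> borel_measurable (stream_space (count_space UNIV))" for i
    by (rule measurable_compose[OF measurable_snth]) simp
  show ?thesis unfolding of_int_sum by measurable
qed


lemma LimInf_sets_gen:
  fixes r :: "'v::countable \<Rightarrow> int"
  assumes "B \<in> sets borel"
  shows "{w. liminf (\<lambda>n. ereal (real_of_int (\<Sum>i\<le>n. r (w !! i)))) \<in> B} \<in> sets (stream_space (count_space UNIV))"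
  using measurable_sets[OF LimInf_meas assms, of r] by (simp add: space_stream_space vimage_def)

lemma LimInf_sets:
  fixes r :: "'v::countable \<Rightarrow> int"
  assumes "Obj \<in> {LimInf r (=) (-\<infinity>), LimInf r (\<lambda>x y. x > y) (-\<infinity>),
              LimInf r (=) \<infinity>, LimInf r (\<lambda>x y. x < y) \<infinity>}"
  shows "Obj \<in> sets (stream_space (count_space UNIV))"
proof -
  have e1: "LimInf r (=) (-\<infinity>) = {w. liminf (\<lambda>n. ereal (real_of_int (\<Sum>i\<le>n. r (w !! i)))) \<in> {-\<infinity>}}"
    by (simp add: LimInf_def)
  have e2: "LimInf r (\<lambda>x y. x > y) (-\<infinity>) = {w. liminf (\<lambda>n. ereal (real_of_int (\<Sum>i\<le>n. r (w !! i)))) \<in> {-\<infinity><..}}"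
    by (simp add: LimInf_def)
  have e3: "LimInf r (=) \<infinity> = {w. liminf (\<lambda>n. ereal (real_of_int (\<Sum>i\<le>n. r (w !! i)))) \<in> {\<infinity>}}"
    by (simp add: LimInf_def)
  have e4: "LimInf r (\<lambda>x y. x < y) \<infinity> = {w. liminf (\<lambda>n. ereal (real_of_int (\<Sum>i\<le>n. r (w !! i)))) \<in> {..<\<infinity>}}"
    by (simp add: LimInf_def)
  have s1: "LimInf r (=) (-\<infinity>) \<in> sets (stream_space (count_space UNIV))"
    unfolding e1 by (rule LimInf_sets_gen) (rule borel_closed, rule closed_singleton)
  have s2: "LimInf r (\<lambda>x y. x > y) (-\<infinity>) \<in> sets (stream_space (count_space UNIV))"
    unfolding e2 by (rule LimInf_sets_gen) (rule borel_open, rule open_greaterThan)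
  have s3: "LimInf r (=) \<infinity> \<in> sets (stream_space (count_space UNIV))"
    unfolding e3 by (rule LimInf_sets_gen) (rule borel_closed, rule closed_singleton)
  have s4: "LimInf r (\<lambda>x y. x < y) \<infinity> \<in> sets (stream_space (count_space UNIV))"
    unfolding e4 by (rule LimInf_sets_gen) (rule borel_open, rule open_lessThan)
  show ?thesis using assms s1 s2 s3 s4 by blast
qed

theorem mainTheorem7:
  fixes E :: "('v::finite \<times> 'v) set" and VM :: "'v set" and P :: "'v \<Rightarrow> 'v pmf"
    and r :: "'v \<Rightarrow> int" and Obj :: "'v stream set"
  assumes "mdp E VM P"
    and "\<forall>v. r v \<in> {-1, 0, 1}"
    and "Obj \<in> {LimInf r (=) (-\<infinity>), LimInf r (\<lambda>x y. x > y) (-\<infinity>),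
              LimInf r (=) \<infinity>, LimInf r (\<lambda>x y. x < y) \<infinity>}"
  shows "\<forall>s. Val E VM P Obj s = Val E VM P (Reach {t. Val E VM P Obj t = 1}) s"
proof
  fix s
  have tail: "\<forall>\<omega>. \<omega> \<in> Obj \<longleftrightarrow> stl \<omega> \<in> Obj"
  proof -
    have t1: "\<forall>\<omega>. \<omega> \<in> LimInf r (=) (-\<infinity>) \<longleftrightarrow> stl \<omega> \<in> LimInf r (=) (-\<infinity>)"
      by (rule LimInf_tail) auto
    have t2: "\<forall>\<omega>. \<omega> \<in> LimInf r (\<lambda>x y. x > y) (-\<infinity>) \<longleftrightarrow> stl \<omega> \<in> LimInf r (\<lambda>x y. x > y) (-\<infinity>)"
      by (rule LimInf_tail) auto
    have t3: "\<forall>\<omega>. \<omega> \<in> LimInf r (=) \<infinity> \<longleftrightarrow> stl \<omega> \<in> LimInf r (=) \<infinity>"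
      by (rule LimInf_tail) auto
    have t4: "\<forall>\<omega>. \<omega> \<in> LimInf r (\<lambda>x y. x < y) \<infinity> \<longleftrightarrow> stl \<omega> \<in> LimInf r (\<lambda>x y. x < y) \<infinity>"
      by (rule LimInf_tail) auto
    show ?thesis using assms(3) t1 t2 t3 t4 by blast
  qed
  interpret G: game_obj E VM P Obj
    by (intro game_obj.intro game.intro game_obj_axioms.intro assms(1) tail LimInf_sets[OF assms(3)])
  show "Val E VM P Obj s = Val E VM P (Reach {t. Val E VM P Obj t = 1}) s"
    using G.main_eq[of s] by (simp add: G.W_def)
qed



end
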